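(* Let $(X,Y)$ be a bivariate random vector that is reverse exchangeable, i.e. $(X,Y)$ and $(-Y,-X)$ have the same joint distribution. Then $$|\max(X,Y)|\overset{d}{=}|\min(X,Y)|\overset{d}{=}|X|\overset{d}{=}|Y|.$$
   Context: $\overset{d}{=}$ denotes equality in distribution. *)

theory Defs
  imports "HOL-Probability.Probability"
begin

end

theory Submission
  imports Defs
begin

theorem theorem2p4:
  fixes M :: "'a measure" and X Y :: "'a \<Rightarrow> real"
  assumes "prob_space M"
    and "X \<in> borel_measurable M" and "Y \<in> borel_measurable M"
    and rev_exch: "distr M (borel \<Otimes>\<^sub>M borel) (\<lambda>\<omega>. (X \<omega>, Y \<omega>))
                 = distr M (borel \<Otimes>\<^sub>M borel) (\<lambda>\<omega>. (- Y \<omega>, - X \<omega>))"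
  shows "distr M borel (\<lambda>\<omega>. \<bar>max (X \<omega>) (Y \<omega>)\<bar>) = distr M borel (\<lambda>\<omega>. \<bar>min (X \<omega>) (Y \<omega>)\<bar>)
       \<and> distr M borel (\<lambda>\<omega>. \<bar>min (X \<omega>) (Y \<omega>)\<bar>) = distr M borel (\<lambda>\<omega>. \<bar>X \<omega>\<bar>)
       \<and> distr M borel (\<lambda>\<omega>. \<bar>X \<omega>\<bar>) = distr M borel (\<lambda>\<omega>. \<bar>Y \<omega>\<bar>)"
proof -
  interpret P: prob_space M by fact
  have mXY: "(\<lambda>\<omega>. (X \<omega>, Y \<omega>)) \<in> measurable M (borel \<Otimes>\<^sub>M borel)"
    using assms(2,3) by measurable
  have mYX: "(\<lambda>\<omega>. (- Y \<omega>, - X \<omega>)) \<in> measurable M (borel \<Otimes>\<^sub>M borel)"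
    using assms(2,3) by measurable
  have key: "distr M borel (\<lambda>\<omega>. f (X \<omega>, Y \<omega>)) = distr M borel (\<lambda>\<omega>. f (- Y \<omega>, - X \<omega>))"
    if f: "f \<in> borel_measurable (borel \<Otimes>\<^sub>M borel)" for f :: "real \<times> real \<Rightarrow> real"
  proof -
    have "distr M borel (\<lambda>\<omega>. f (X \<omega>, Y \<omega>)) = distr (distr M (borel \<Otimes>\<^sub>M borel) (\<lambda>\<omega>. (X \<omega>, Y \<omega>))) borel f"
      using distr_distr[OF f mXY] by (simp add: comp_def)
    also have "\<dots> = distr (distr M (borel \<Otimes>\<^sub>M borel) (\<lambda>\<omega>. (- Y \<omega>, - X \<omega>))) borel f"
      using rev_exch by simp
    also have "\<dots> = distr M borel (\<lambda>\<omega>. f (- Y \<omega>, - X \<omega>))"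
      using distr_distr[OF f mYX] by (simp add: comp_def)
    finally show ?thesis .
  qed
  have e1: "distr M borel (\<lambda>\<omega>. \<bar>max (X \<omega>) (Y \<omega>)\<bar>) = distr M borel (\<lambda>\<omega>. \<bar>min (X \<omega>) (Y \<omega>)\<bar>)"
  proof -
    have "distr M borel (\<lambda>\<omega>. (\<lambda>p. \<bar>max (fst p) (snd p)\<bar>) (X \<omega>, Y \<omega>))
        = distr M borel (\<lambda>\<omega>. (\<lambda>p. \<bar>max (fst p) (snd p)\<bar>) (- Y \<omega>, - X \<omega>))"
      by (rule key) measurable
    moreover have "\<And>\<omega>. \<bar>max (- Y \<omega>) (- X \<omega>)\<bar> = \<bar>min (X \<omega>) (Y \<omega>)\<bar>"
      by (simp add: max_def min_def)
    ultimately show ?thesis by simp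
  qed
  have e3: "distr M borel (\<lambda>\<omega>. \<bar>X \<omega>\<bar>) = distr M borel (\<lambda>\<omega>. \<bar>Y \<omega>\<bar>)"
  proof -
    have "distr M borel (\<lambda>\<omega>. (\<lambda>p. \<bar>fst p\<bar>) (X \<omega>, Y \<omega>))
        = distr M borel (\<lambda>\<omega>. (\<lambda>p. \<bar>fst p\<bar>) (- Y \<omega>, - X \<omega>))"
      by (rule key) measurable
    then show ?thesis by simp
  qed
  have e2: "distr M borel (\<lambda>\<omega>. \<bar>min (X \<omega>) (Y \<omega>)\<bar>) = distr M borel (\<lambda>\<omega>. \<bar>X \<omega>\<bar>)"
  proof (rule measure_eqI)
    show "sets (distr M borel (\<lambda>\<omega>. \<bar>min (X \<omega>) (Y \<omega>)\<bar>)) = sets (distr M borel (\<lambda>\<omega>. \<bar>X \<omega>\<bar>))" by simp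
  next
    fix A assume "A \<in> sets (distr M borel (\<lambda>\<omega>. \<bar>min (X \<omega>) (Y \<omega>)\<bar>))"
    then have A: "A \<in> sets borel" by simp
    define Smax where "Smax = (\<lambda>\<omega>. \<bar>max (X \<omega>) (Y \<omega>)\<bar>) -` A \<inter> space M"
    define Smin where "Smin = (\<lambda>\<omega>. \<bar>min (X \<omega>) (Y \<omega>)\<bar>) -` A \<inter> space M"
    define SX where "SX = (\<lambda>\<omega>. \<bar>X \<omega>\<bar>) -` A \<inter> space M"
    define SY where "SY = (\<lambda>\<omega>. \<bar>Y \<omega>\<bar>) -` A \<inter> space M"
    have mmax: "(\<lambda>\<omega>. \<bar>max (X \<omega>) (Y \<omega>)\<bar>) \<in> borel_measurable M" using assms(2,3) by measurable
    have mmin: "(\<lambda>\<omega>. \<bar>min (X \<omega>) (Y \<omega>)\<bar>) \<in> borel_measurable M" using assms(2,3) by measurable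
    have mX: "(\<lambda>\<omega>. \<bar>X \<omega>\<bar>) \<in> borel_measurable M" using assms(2,3) by measurable
    have mY: "(\<lambda>\<omega>. \<bar>Y \<omega>\<bar>) \<in> borel_measurable M" using assms(2,3) by measurable
    have s: "Smax \<in> sets M" "Smin \<in> sets M" "SX \<in> sets M" "SY \<in> sets M"
      unfolding Smax_def Smin_def SX_def SY_def
      using measurable_sets[OF mmax A] measurable_sets[OF mmin A]
        measurable_sets[OF mX A] measurable_sets[OF mY A] by auto
    have q1: "measure M Smax = measure M Smin"
      using arg_cong[OF e1, of "\<lambda>N. measure N A"] measure_distr[OF mmax A] measure_distr[OF mmin A]
      unfolding Smax_def Smin_def by simp
    have q3: "measure M SX = measure M SY"
      using arg_cong[OF e3, of "\<lambda>N. measure N A"] measure_distr[OF mX A] measure_distr[OF mY A]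
      unfolding SX_def SY_def by simp
    have pt: "\<And>\<omega>. indicator Smax \<omega> + indicator Smin \<omega> = (indicator SX \<omega> + indicator SY \<omega> :: real)"
      unfolding Smax_def Smin_def SX_def SY_def indicator_def
      by (auto simp: max_def min_def)
    have "measure M Smax + measure M Smin = measure M SX + measure M SY"
    proof -
      have "measure M Smax + measure M Smin = (LINT \<omega>|M. indicator Smax \<omega> + indicator Smin \<omega>)"
        using s by (subst Bochner_Integration.integral_add) (auto simp: Int_absorb2 sets.sets_into_space P.emeasure_eq_measure intro!: integrable_real_indicator)
      also have "\<dots> = (LINT \<omega>|M. indicator SX \<omega> + indicator SY \<omega>)" using pt by simp
      also have "\<dots> = measure M SX + measure M SY"
        using s by (subst Bochner_Integration.integral_add) (auto simp: Int_absorb2 sets.sets_into_space P.emeasure_eq_measure intro!: integrable_real_indicator)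
      finally show ?thesis .
    qed
    then have "measure M Smin = measure M SX" using q1 q3 by simp
    then show "emeasure (distr M borel (\<lambda>\<omega>. \<bar>min (X \<omega>) (Y \<omega>)\<bar>)) A = emeasure (distr M borel (\<lambda>\<omega>. \<bar>X \<omega>\<bar>)) A"
      using emeasure_distr[OF mmin A] emeasure_distr[OF mX A]
      unfolding Smin_def SX_def by (simp add: P.emeasure_eq_measure)
  qed
  show ?thesis using e1 e2 e3 by simp
qed

end
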